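(* Let $L_f>8\alpha>0$ and $\epsilon>0$ be given. There exists an infinite-dimensional smooth problem of the form described in the context with aggregate smoothness constant $L_f$ and with $u$ having strong convexity modulus $\alpha$, such that any DPM algorithm requires at least $\Omega(\sqrt{L_f/\alpha}\log(1/\epsilon))$ communication rounds to find an $\epsilon$-close solution, i.e. a point $x$ with $\|x-x^*\|^2\le\epsilon$ (the dependence on $R_0\ge\|x^0-x^*\|$ inside the logarithm being ignored).
   Context: Problem form: $\min_{x\in X}\{f(x):=\max_{p\in P}\sum_{i=1}^mp_if_i(x)-\rho^*(p)+u(x)\}$ with $X$ a closed convex subset of the (possibly infinite-dimensional) Euclidean space of variables, $P\subseteq\{p\in\mathbb{R}^m:\sum_ip_i=1,p\ge0\}$ closed convex, $\rho^*$, $u$ proper closed convex, and $f_i(x)=\max_{\pi_i\in\Pi_i}\langle A_ix,\pi_i\rangle-f_i^*(\pi_i)$; smooth means $A_i=I$, $f_i$ convex with Lipschitz gradient and $f_i^*$ its conjugate. $x^*$ is the optimal solution. The aggregate smoothness constant is $\max_{p\in P}L_p$, where $L_p$ is the Lipschitz constant of $\nabla\sum_ip_if_i$. $x^0=0$. A DPM algorithm on a star network (server plus workers, worker $i$ knowing only $f_i$, server knowing $u$, $\rho^*$, $P$) maintains a server memory and, for each worker, primal and dual memories, all $\{0\}$ initially. In each communication round each worker sends one vector from the span of its primal memory to the server and receives one vector from the span of the server memory; between rounds each worker may, any finite number of times, pick $\bar x$ in the span of its primal memory, $\bar\pi_i$ in the span of its dual memory, $\tau\ge0$, compute $\pi_i'\in\arg\max_{\pi_i\in\Pi_i}\langle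 A_i\bar x,\pi_i\rangle-f_i^*(\pi_i)-\frac\tau2\|\pi_i-\bar\pi_i\|^2$, add $A_i^\top\pi_i',A_i^\top\bar\pi_i$ to its primal memory and $\pi_i',A_i\bar x$ to its dual memory; the server may, any finite number of times, add $\arg\min_{x\in X}u(x)+\frac\eta2\|x-\bar x\|^2$ for $\bar x$ in the span of its memory and $\eta>0$. The output after $t$ rounds lies in the span of all primal memories and the server memory. $\Omega$ hides absolute constants. *)

theory Defs
  imports "HOL-Analysis.Analysis"
begin

typedef l2 = "{x::nat \<Rightarrow> real. summable (\<lambda>i. (x i)\<^sup>2)}" morphisms l2_seq Abs_l2
  by (rule exI[of _ "\<lambda>_. 0"]) simp

setup_lifting type_definition_l2

lemma l2_abs_mult_le: "\<bar>a*b\<bar> \<le> a\<^sup>2 + (b::real)\<^sup>2"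
proof -
  have "0 \<le> (\<bar>a\<bar> - \<bar>b\<bar>)\<^sup>2" by simp
  hence h: "2*(\<bar>a\<bar>*\<bar>b\<bar>) \<le> a\<^sup>2 + b\<^sup>2" by (simp add: power2_eq_square algebra_simps)
  have h2: "0 \<le> \<bar>a\<bar>*\<bar>b\<bar>" by simp
  have "\<bar>a*b\<bar> = \<bar>a\<bar>*\<bar>b\<bar>" by (simp add: abs_mult)
  with h h2 show ?thesis by linarith
qed
lemma l2_sq_add_le: "(a+b)\<^sup>2 \<le> 2*a\<^sup>2 + 2*(b::real)\<^sup>2"
proof -
  have "0 \<le> (a - b)\<^sup>2" by simp
  thus ?thesis by (simp add: power2_eq_square algebra_simps)
qed

lemma l2_add_summable:
  assumes "summable (\<lambda>i. (x i)\<^sup>2)" "summable (\<lambda>i. (y i)\<^sup>2::real)"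
  shows "summable (\<lambda>i. (x i + y i)\<^sup>2)"
proof (rule summable_comparison_test'[where g="\<lambda>i. 2*(x i)\<^sup>2 + 2*(y i)\<^sup>2"])
  show "summable (\<lambda>i. 2*(x i)\<^sup>2 + 2*(y i)\<^sup>2)"
    using assms by (intro summable_add summable_mult) auto
  fix n show "norm ((x n + y n)\<^sup>2) \<le> 2*(x n)\<^sup>2 + 2*(y n)\<^sup>2"
    using l2_sq_add_le by simp
qed

lemma l2_prod_summable:
  assumes "summable (\<lambda>i. (x i)\<^sup>2)" "summable (\<lambda>i. (y i)\<^sup>2::real)"
  shows "summable (\<lambda>i. x i * y i)"
proof (rule summable_comparison_test'[where g="\<lambda>i. (x i)\<^sup>2 + (y i)\<^sup>2"])
  show "summable (\<lambda>i. (x i)\<^sup>2 + (y i)\<^sup>2)"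
    using assms by (intro summable_add) auto
  fix n show "norm (x n * y n) \<le> (x n)\<^sup>2 + (y n)\<^sup>2"
    using l2_abs_mult_le by simp
qed

instantiation l2 :: real_inner
begin
lift_definition zero_l2 :: l2 is "\<lambda>_. 0" by simp
lift_definition plus_l2 :: "l2 \<Rightarrow> l2 \<Rightarrow> l2" is "\<lambda>x y i. x i + y i" by (rule l2_add_summable)
lift_definition uminus_l2 :: "l2 \<Rightarrow> l2" is "\<lambda>x i. - x i" by simp
lift_definition minus_l2 :: "l2 \<Rightarrow> l2 \<Rightarrow> l2" is "\<lambda>x y i. x i - y i"
  using l2_add_summable[of _ "\<lambda>i. - _ i"] by simp
lift_definition scaleR_l2 :: "real \<Rightarrow> l2 \<Rightarrow> l2" is "\<lambda>c x i. c * x i"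
  by (simp add: power_mult_distrib summable_mult)
lift_definition inner_l2 :: "l2 \<Rightarrow> l2 \<Rightarrow> real" is "\<lambda>x y. \<Sum>i. x i * y i" .
definition norm_l2 :: "l2 \<Rightarrow> real" where "norm_l2 x = sqrt (inner x x)"
definition sgn_l2 :: "l2 \<Rightarrow> l2" where "sgn_l2 x = scaleR (inverse (norm x)) x"
definition dist_l2 :: "l2 \<Rightarrow> l2 \<Rightarrow> real" where "dist_l2 x y = norm (x - y)"
definition uniformity_l2 :: "(l2 \<times> l2) filter" where
  "uniformity_l2 = (INF e\<in>{0 <..}. principal {(x, y). dist x y < e})"
definition open_l2 :: "l2 set \<Rightarrow> bool" where
  "open_l2 U \<longleftrightarrow> (\<forall>x\<in>U. eventually (\<lambda>(x', y). x' = x \<longrightarrow> y \<in> U) uniformity)"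
instance
proof
  fix x y z :: l2 and a b :: real and U :: "l2 set"
  show "x + y + z = x + (y + z)" by transfer (simp add: algebra_simps)
  show "x + y = y + x" by transfer (simp add: algebra_simps)
  show "0 + x = x" by transfer simp
  show "- x + x = 0" by transfer simp
  show "x - y = x + - y" by transfer simp
  show "a *\<^sub>R (x + y) = a *\<^sub>R x + a *\<^sub>R y" by transfer (simp add: algebra_simps)
  show "(a + b) *\<^sub>R x = a *\<^sub>R x + b *\<^sub>R x" by transfer (simp add: algebra_simps)
  show "a *\<^sub>R b *\<^sub>R x = (a * b) *\<^sub>R x" by transfer (simp add: algebra_simps)
  show "1 *\<^sub>R x = x" by transfer simp
  show "sgn x = scaleR (inverse (norm x)) x" by (simp add: sgn_l2_def)
  show "dist x y = norm (x - y)" by (simp add: dist_l2_def)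
  show "(uniformity :: (l2 \<times> l2) filter) = (INF e\<in>{0 <..}. principal {(x, y). dist x y < (e::real)})"
    by (rule uniformity_l2_def)
  show "open U \<longleftrightarrow> (\<forall>x\<in>U. eventually (\<lambda>(x', y). x' = x \<longrightarrow> y \<in> U) uniformity)"
    by (simp add: open_l2_def)
  show "inner x y = inner y x" by transfer (simp add: mult.commute)
  show "inner (x + y) z = inner x z + inner y z"
    by transfer (simp add: distrib_right suminf_add l2_prod_summable)
  show "inner (a *\<^sub>R x) y = a * inner x y"
    by transfer (simp add: mult.assoc suminf_mult l2_prod_summable)
  show "0 \<le> inner x x" by transfer (simp add: suminf_nonneg power2_eq_square[symmetric])
  show "inner x x = 0 \<longleftrightarrow> x = 0"
    by transfer (auto simp: suminf_eq_zero_iff fun_eq_iff power2_eq_square[symmetric])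
  show "norm x = sqrt (inner x x)" by (simp add: norm_l2_def)
qed
end


definition conj_dom :: "('v::real_inner \<Rightarrow> real) \<Rightarrow> 'v set" where
  "conj_dom g = {\<pi>. bdd_above (range (\<lambda>x. inner x \<pi> - g x))}"

definition conj_fun :: "('v::real_inner \<Rightarrow> real) \<Rightarrow> 'v \<Rightarrow> real" where
  "conj_fun g \<pi> = (SUP x. inner x \<pi> - g x)"

definition is_gradient :: "('v::real_inner \<Rightarrow> real) \<Rightarrow> ('v \<Rightarrow> 'v) \<Rightarrow> bool" where
  "is_gradient g G \<longleftrightarrow> (\<forall>x. (g has_derivative (\<lambda>h. inner (G x) h)) (at x))"

definition smooth_convex :: "('v::real_inner \<Rightarrow> real) \<Rightarrow> bool" where
  "smooth_convex g \<longleftrightarrow> convex_on UNIV g \<and>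
     (\<exists>G L. is_gradient g G \<and> L-lipschitz_on UNIV G)"

definition grad_lip_const :: "('v::real_inner \<Rightarrow> real) \<Rightarrow> real" where
  "grad_lip_const g = Inf {L. \<exists>G. is_gradient g G \<and> L-lipschitz_on UNIV G}"

text \<open>Aggregate smoothness constant max_{p in P} L_p, L_p the Lipschitz constant of
  the gradient of sum_i p_i f_i.\<close>
definition aggregate_smoothness :: "nat \<Rightarrow> (nat \<Rightarrow> 'v::real_inner \<Rightarrow> real) \<Rightarrow> l2 set \<Rightarrow> real \<Rightarrow> bool" where
  "aggregate_smoothness m f P Lf \<longleftrightarrow>
     (\<forall>p\<in>P. grad_lip_const (\<lambda>x. \<Sum>i<m. l2_seq p i * f i x) \<le> Lf) \<and>
     (\<exists>p\<in>P. grad_lip_const (\<lambda>x. \<Sum>i<m. l2_seq p i * f i x) = Lf)"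

definition strongly_convex_on :: "'v::real_inner set \<Rightarrow> real \<Rightarrow> ('v \<Rightarrow> real) \<Rightarrow> bool" where
  "strongly_convex_on X a u \<longleftrightarrow> convex_on X (\<lambda>x. u x - a / 2 * (norm x)\<^sup>2)"

definition strong_convexity_modulus :: "'v::real_inner set \<Rightarrow> ('v \<Rightarrow> real) \<Rightarrow> real \<Rightarrow> bool" where
  "strong_convexity_modulus X u a \<longleftrightarrow>
     strongly_convex_on X a u \<and> (\<forall>b>a. \<not> strongly_convex_on X b u)"

definition closed_fun_on :: "'a::topological_space set \<Rightarrow> ('a \<Rightarrow> real) \<Rightarrow> bool" where
  "closed_fun_on C g \<longleftrightarrow> closed {(x, y). x \<in> C \<and> g x \<le> y}"

text \<open>P is a closed convex subset of the probability simplex of R^m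
  (vectors of R^m are represented as elements of l2 vanishing from index m on, so that
  R^m carries its usual Euclidean structure).\<close>
definition simplex_subset :: "nat \<Rightarrow> l2 set \<Rightarrow> bool" where
  "simplex_subset m P \<longleftrightarrow> P \<noteq> {} \<and> closed P \<and> convex P \<and>
     (\<forall>p\<in>P. (\<forall>i<m. 0 \<le> l2_seq p i) \<and> (\<forall>i\<ge>m. l2_seq p i = 0) \<and> (\<Sum>i<m. l2_seq p i) = 1)"

text \<open>Objective f(x) = max_{p in P} sum_i p_i f_i(x) - rho^*(p) + u(x).\<close>
definition objective :: "nat \<Rightarrow> (nat \<Rightarrow> 'v \<Rightarrow> real) \<Rightarrow> l2 set \<Rightarrow> (l2 \<Rightarrow> real)
    \<Rightarrow> ('v \<Rightarrow> real) \<Rightarrow> 'v \<Rightarrow> real" where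
  "objective m f P rho u x = (SUP p\<in>P. (\<Sum>i<m. l2_seq p i * f i x) - rho p) + u x"

text \<open>Smooth problem instance of the form in the context (A_i = I, Pi_i = dom f_i^*).\<close>
definition smooth_instance :: "nat \<Rightarrow> (nat \<Rightarrow> 'v::real_inner \<Rightarrow> real) \<Rightarrow> l2 set
    \<Rightarrow> (l2 \<Rightarrow> real) \<Rightarrow> ('v \<Rightarrow> real) \<Rightarrow> 'v set \<Rightarrow> bool" where
  "smooth_instance m f P rho u X \<longleftrightarrow>
     1 \<le> m \<and> X \<noteq> {} \<and> closed X \<and> convex X \<and>
     simplex_subset m P \<and> convex_on P rho \<and> closed_fun_on P rho \<and>
     convex_on X u \<and> closed_fun_on X u \<and>
     (\<forall>i<m. smooth_convex (f i))"

definition is_optimal :: "nat \<Rightarrow> (nat \<Rightarrow> 'v \<Rightarrow> real) \<Rightarrow> l2 set \<Rightarrow> (l2 \<Rightarrow> real)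
    \<Rightarrow> ('v \<Rightarrow> real) \<Rightarrow> 'v set \<Rightarrow> 'v \<Rightarrow> bool" where
  "is_optimal m f P rho u X xs \<longleftrightarrow>
     xs \<in> X \<and> (\<forall>x\<in>X. objective m f P rho u xs \<le> objective m f P rho u x)"

text \<open>State: server memory, and for each worker i its (primal memory, dual memory).\<close>
type_synonym ('v, 'w) dpm_state = "'v set \<times> (nat \<Rightarrow> 'v set \<times> 'w set)"

definition dpm_init :: "('v::real_vector, 'w::real_vector) dpm_state" where
  "dpm_init = ({0}, \<lambda>i. ({0}, {0}))"

definition worker_step :: "('v::real_inner \<Rightarrow> 'w::real_inner) \<Rightarrow> ('w \<Rightarrow> 'v) \<Rightarrow> 'w set \<Rightarrow> ('w \<Rightarrow> real)
    \<Rightarrow> 'v set \<times> 'w set \<Rightarrow> 'v set \<times> 'w set \<Rightarrow> bool" where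
  "worker_step A At Pis fs M M' \<longleftrightarrow>
     (\<exists>xb pb \<tau> p'. xb \<in> span (fst M) \<and> pb \<in> span (snd M) \<and> 0 \<le> \<tau> \<and> p' \<in> Pis \<and>
        (\<forall>p\<in>Pis. inner (A xb) p - fs p - \<tau> / 2 * (norm (p - pb))\<^sup>2
                 \<le> inner (A xb) p' - fs p' - \<tau> / 2 * (norm (p' - pb))\<^sup>2) \<and>
        M' = (fst M \<union> {At p', At pb}, snd M \<union> {p', A xb}))"

definition server_step :: "'v::real_inner set \<Rightarrow> ('v \<Rightarrow> real) \<Rightarrow> 'v set \<Rightarrow> 'v set \<Rightarrow> bool" where
  "server_step X u S S' \<longleftrightarrow>
     (\<exists>xb \<eta> z. xb \<in> span S \<and> 0 < \<eta> \<and> z \<in> X \<and>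
        (\<forall>x\<in>X. u z + \<eta> / 2 * (norm (z - xb))\<^sup>2 \<le> u x + \<eta> / 2 * (norm (x - xb))\<^sup>2) \<and>
        S' = S \<union> {z})"

definition local_step :: "nat \<Rightarrow> (nat \<Rightarrow> 'v::real_inner \<Rightarrow> 'w::real_inner) \<Rightarrow> (nat \<Rightarrow> 'w \<Rightarrow> 'v)
    \<Rightarrow> (nat \<Rightarrow> 'w set) \<Rightarrow> (nat \<Rightarrow> 'w \<Rightarrow> real) \<Rightarrow> 'v set \<Rightarrow> ('v \<Rightarrow> real)
    \<Rightarrow> ('v, 'w) dpm_state \<Rightarrow> ('v, 'w) dpm_state \<Rightarrow> bool" where
  "local_step m A At Pis fs X u s s' \<longleftrightarrow>
     (\<exists>i<m. fst s' = fst s \<and> worker_step (A i) (At i) (Pis i) (fs i) (snd s i) (snd s' i) \<and>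
            (\<forall>j. j \<noteq> i \<longrightarrow> snd s' j = snd s j)) \<or>
     (server_step X u (fst s) (fst s') \<and> snd s' = snd s)"

definition comm_round :: "nat \<Rightarrow> ('v::real_vector, 'w) dpm_state \<Rightarrow> ('v, 'w) dpm_state \<Rightarrow> bool" where
  "comm_round m s s' \<longleftrightarrow>
     (\<exists>v w. (\<forall>i<m. v i \<in> span (fst (snd s i))) \<and>
            fst s' = fst s \<union> v ` {..<m} \<and>
            (\<forall>i<m. w i \<in> span (fst s')) \<and>
            snd s' = (\<lambda>i. if i < m then (fst (snd s i) \<union> {w i}, snd (snd s i)) else snd s i))"

inductive dpm_reach :: "nat \<Rightarrow> (nat \<Rightarrow> 'v::real_inner \<Rightarrow> 'w::real_inner) \<Rightarrow> (nat \<Rightarrow> 'w \<Rightarrow> 'v)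
    \<Rightarrow> (nat \<Rightarrow> 'w set) \<Rightarrow> (nat \<Rightarrow> 'w \<Rightarrow> real) \<Rightarrow> 'v set \<Rightarrow> ('v \<Rightarrow> real)
    \<Rightarrow> nat \<Rightarrow> ('v, 'w) dpm_state \<Rightarrow> bool"
  for m A At Pis fs X u where
  init: "(local_step m A At Pis fs X u)\<^sup>*\<^sup>* dpm_init s \<Longrightarrow> dpm_reach m A At Pis fs X u 0 s"
| round: "dpm_reach m A At Pis fs X u t s \<Longrightarrow> comm_round m s s1 \<Longrightarrow>
          (local_step m A At Pis fs X u)\<^sup>*\<^sup>* s1 s2 \<Longrightarrow> dpm_reach m A At Pis fs X u (Suc t) s2"

definition dpm_outputs :: "nat \<Rightarrow> ('v::real_vector, 'w) dpm_state \<Rightarrow> 'v set" where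
  "dpm_outputs m s = span (fst s \<union> (\<Union>i<m. fst (snd s i)))"

definition smooth_dpm_reach :: "nat \<Rightarrow> (nat \<Rightarrow> 'v::real_inner \<Rightarrow> real) \<Rightarrow> 'v set \<Rightarrow> ('v \<Rightarrow> real)
    \<Rightarrow> nat \<Rightarrow> ('v, 'v) dpm_state \<Rightarrow> bool" where
  "smooth_dpm_reach m f X u =
     dpm_reach m (\<lambda>i. id) (\<lambda>i. id) (\<lambda>i. conj_dom (f i)) (\<lambda>i. conj_fun (f i)) X u"

end

theory Submission
  imports Defs
begin

lemma l2_summ: "summable (\<lambda>i. (l2_seq x i)\<^sup>2)"
  using l2_seq[of x] by simp

lemma l2_eqI: "(\<And>i. l2_seq x i = l2_seq y i) \<Longrightarrow> x = y"
  by (metis l2_seq_inject ext)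

lemma l2_Abs_inv: "summable (\<lambda>i. (g i)\<^sup>2) \<Longrightarrow> l2_seq (Abs_l2 g) = g"
  by (simp add: Abs_l2_inverse)

lemma l2_seq_simps [simp]:
  "l2_seq (x + y) i = l2_seq x i + l2_seq y i"
  "l2_seq (x - y) i = l2_seq x i - l2_seq y i"
  "l2_seq (- x) i = - l2_seq x i"
  "l2_seq (r *\<^sub>R x) i = r * l2_seq x i"
  "l2_seq 0 i = 0"
  by (simp_all add: plus_l2.rep_eq minus_l2.rep_eq uminus_l2.rep_eq scaleR_l2.rep_eq zero_l2.rep_eq)

lemma l2_inner: "inner x y = (\<Sum>i. l2_seq x i * l2_seq y i)"
  by (simp add: inner_l2.rep_eq)

lemma l2_inner_summable: "summable (\<lambda>i. l2_seq x i * l2_seq y i)"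
  by (rule l2_prod_summable[OF l2_summ l2_summ])

lemma l2_norm_sq: "(norm x)\<^sup>2 = (\<Sum>i. (l2_seq x i)\<^sup>2)"
  using power2_norm_eq_inner[of x] l2_inner[of x x] by (simp add: power2_eq_square)

lemma l2_coord_le: "(l2_seq x i)\<^sup>2 \<le> (norm x)\<^sup>2"
  unfolding l2_norm_sq using sum_le_suminf[OF l2_summ[of x], of "{i}"] by simp

definition trunc :: "nat \<Rightarrow> l2 \<Rightarrow> l2" where
  "trunc k x = Abs_l2 (\<lambda>i. if i \<le> k then l2_seq x i else 0)"

lemma trunc_seq [simp]: "l2_seq (trunc k x) i = (if i \<le> k then l2_seq x i else 0)"
proof -
  have "summable (\<lambda>i. (if i \<le> k then l2_seq x i else 0)\<^sup>2)"
    by (rule summable_comparison_test'[OF l2_summ[of x]]) auto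
  thus ?thesis unfolding trunc_def by (simp add: l2_Abs_inv)
qed

definition Vk :: "nat \<Rightarrow> l2 set" where "Vk k = {x. \<forall>i>k. l2_seq x i = 0}"

lemma Vk_iff_trunc: "x \<in> Vk k \<longleftrightarrow> trunc k x = x"
  unfolding Vk_def by (auto intro!: l2_eqI) (metis trunc_seq not_le)

lemma trunc_in_Vk: "trunc k x \<in> Vk k" unfolding Vk_def by simp

lemma Vk_mono: "k \<le> k' \<Longrightarrow> Vk k \<subseteq> Vk k'" unfolding Vk_def by auto

lemma subspace_Vk: "subspace (Vk k)"
  unfolding subspace_def Vk_def by auto

lemma span_Vk: "S \<subseteq> Vk k \<Longrightarrow> span S \<subseteq> Vk k"
  by (rule span_minimal[OF _ subspace_Vk])

lemma trunc_add [simp]: "trunc k (x + y) = trunc k x + trunc k y"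
  by (rule l2_eqI) simp
lemma trunc_diff [simp]: "trunc k (x - y) = trunc k x - trunc k y"
  by (rule l2_eqI) simp
lemma trunc_scale [simp]: "trunc k (r *\<^sub>R x) = r *\<^sub>R trunc k x"
  by (rule l2_eqI) simp
lemma trunc_trunc [simp]: "trunc k (trunc k x) = trunc k x"
  by (rule l2_eqI) simp

lemma inner_trunc: "inner (trunc k x) y = inner x (trunc k y)"
  unfolding l2_inner by (rule arg_cong[where f=suminf]) (auto simp: fun_eq_iff)

lemma inner_trunc_orth: "inner (trunc k x) (y - trunc k y) = 0"
proof -
  have "(\<lambda>i. l2_seq (trunc k x) i * l2_seq (y - trunc k y) i) = (\<lambda>i. 0)" by auto
  thus ?thesis unfolding l2_inner by simp
qed

lemma inner_Vk_orth: "a \<in> Vk k \<Longrightarrow> inner a (y - trunc k y) = 0"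
  using inner_trunc_orth[of k a y] by (simp add: Vk_iff_trunc)

lemma pyth: "a \<in> Vk k \<Longrightarrow> (norm (a + (y - trunc k y)))\<^sup>2 = (norm a)\<^sup>2 + (norm (y - trunc k y))\<^sup>2"
  using inner_Vk_orth[of a k y]
  by (simp add: power2_norm_eq_inner inner_add_left inner_add_right inner_commute)

lemma norm_trunc_split: "(norm x)\<^sup>2 = (norm (trunc k x))\<^sup>2 + (norm (x - trunc k x))\<^sup>2"
  using pyth[OF trunc_in_Vk, of k x x] by simp

definition ev :: "nat \<Rightarrow> l2" where "ev j = Abs_l2 (\<lambda>i. if i = j then 1 else 0)"

lemma ev_seq [simp]: "l2_seq (ev j) i = (if i = j then 1 else 0)"
proof -
  have "summable (\<lambda>i. (if i = j then 1 else 0::real)\<^sup>2)"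
    by (rule summable_comparison_test'[where g="\<lambda>i. if i = j then 1 else 0"]) auto
  thus ?thesis unfolding ev_def by (simp add: l2_Abs_inv)
qed

lemma inner_ev: "inner (ev j) x = l2_seq x j"
proof -
  have "(\<Sum>i. l2_seq (ev j) i * l2_seq x i) = (\<Sum>i. if i = j then l2_seq x j else 0)"
    by (rule arg_cong[where f=suminf]) auto
  also have "... = l2_seq x j" by (rule sums_unique[symmetric]) (rule sums_single)
  finally show ?thesis unfolding l2_inner .
qed


lemma pair_sums:
  fixes h :: "nat \<Rightarrow> real"
  assumes "summable h"
  shows "(\<lambda>j. h (2*j+s) + h (2*j+s+1)) sums (suminf h - (\<Sum>i<s. h i))"
proof -
  have "(\<lambda>i. h (i+s)) sums (suminf h - (\<Sum>i<s. h i))"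
    by (rule sums_split_initial_segment[OF summable_sums[OF assms]])
  from sums_group[OF this, of 2]
  have "(\<lambda>n. sum (\<lambda>i. h (i+s)) {n*2..<n*2+2}) sums (suminf h - (\<Sum>i<s. h i))" by simp
  moreover have "(\<lambda>n. sum (\<lambda>i. h (i+s)) {n*2..<n*2+2}) = (\<lambda>j. h (2*j+s) + h (2*j+s+1))"
  proof
    fix n :: nat
    have "{n*2..<n*2+2} = {n*2, n*2+1}" by auto
    thus "sum (\<lambda>i. h (i+s)) {n*2..<n*2+2} = h (2*n+s) + h (2*n+s+1)"
      by (simp add: algebra_simps)
  qed
  ultimately show ?thesis by simp
qed

lemma pair_suminf:
  fixes h :: "nat \<Rightarrow> real"
  assumes "summable h"
  shows "suminf h = (\<Sum>i<s. h i) + (\<Sum>j. h (2*j+s) + h (2*j+s+1))"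
  using sums_unique[OF pair_sums[OF assms, of s]] by simp

lemma pair_summable: "summable (h::nat\<Rightarrow>real) \<Longrightarrow> summable (\<lambda>j. h (2*j+s) + h (2*j+s+1))"
  using pair_sums sums_summable by blast

lemma summable_div2:
  fixes a :: "nat \<Rightarrow> real"
  assumes "summable a" "\<And>i. 0 \<le> a i"
  shows "summable (\<lambda>i. a (i div 2))"
proof (rule summableI_nonneg_bounded[where x="2 * suminf a"])
  fix n
  have eq: "(\<Sum>i<2*m. a (i div 2)) = 2 * (\<Sum>j<m. a j)" for m
  proof (induction m)
    case 0 then show ?case by simp
  next
    case (Suc m)
    have "2 * Suc m = Suc (Suc (2*m))" by simp
    hence "(\<Sum>i<2*Suc m. a (i div 2)) = (\<Sum>i<2*m. a (i div 2)) + a ((2*m) div 2) + a (Suc (2*m) div 2)"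
      by (simp only: sum.lessThan_Suc)
    also have "... = 2 * (\<Sum>j<m. a j) + a m + a m" using Suc by simp
    finally show ?case by simp
  qed
  have "(\<Sum>i<n. a (i div 2)) \<le> (\<Sum>i<2*n. a (i div 2))"
    by (rule sum_mono2) (auto simp: assms)
  also have "... = 2 * (\<Sum>j<n. a j)" by (rule eq)
  also have "... \<le> 2 * suminf a"
    using sum_le_suminf[OF assms(1), of "{..<n}"] assms(2) by simp
  finally show "(\<Sum>i<n. a (i div 2)) \<le> 2 * suminf a" .
qed (simp add: assms)

definition Dop :: "nat \<Rightarrow> l2 \<Rightarrow> l2" where
  "Dop s x = Abs_l2 (\<lambda>j. l2_seq x (2*j+s) - l2_seq x (2*j+s+1))"

lemma Dop_summ: "summable (\<lambda>j. (l2_seq x (2*j+s) - l2_seq x (2*j+s+1))\<^sup>2)"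
proof (rule summable_comparison_test'[where g="\<lambda>j. 2 * ((l2_seq x (2*j+s))\<^sup>2 + (l2_seq x (2*j+s+1))\<^sup>2)"])
  show "summable (\<lambda>j. 2 * ((l2_seq x (2*j+s))\<^sup>2 + (l2_seq x (2*j+s+1))\<^sup>2))"
    by (rule summable_mult[OF pair_summable[OF l2_summ]])
  fix n show "norm ((l2_seq x (2*n+s) - l2_seq x (2*n+s+1))\<^sup>2) \<le> 2 * ((l2_seq x (2*n+s))\<^sup>2 + (l2_seq x (2*n+s+1))\<^sup>2)"
    using l2_sq_add_le[of "l2_seq x (2*n+s)" "- l2_seq x (2*n+s+1)"] by simp
qed

lemma Dop_seq [simp]: "l2_seq (Dop s x) j = l2_seq x (2*j+s) - l2_seq x (2*j+s+1)"
  unfolding Dop_def using Dop_summ[of x s] by (simp add: l2_Abs_inv)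

definition Dadj :: "nat \<Rightarrow> l2 \<Rightarrow> l2" where
  "Dadj s y = Abs_l2 (\<lambda>i. if i < s then 0 else if even (i - s) then l2_seq y ((i-s) div 2) else - l2_seq y ((i-s) div 2))"

lemma Dadj_summ: "summable (\<lambda>i. (if i < s then 0 else if even (i - s) then l2_seq y ((i-s) div 2) else - l2_seq y ((i-s) div 2))\<^sup>2)"
proof -
  have "summable (\<lambda>i. (l2_seq y (i div 2))\<^sup>2)"
    by (rule summable_div2[where a="\<lambda>j. (l2_seq y j)\<^sup>2", OF l2_summ]) simp
  moreover have "(\<lambda>i. (if i + s < s then 0 else if even (i + s - s) then l2_seq y ((i + s - s) div 2) else - l2_seq y ((i+s-s) div 2))\<^sup>2)
     = (\<lambda>i. (l2_seq y (i div 2))\<^sup>2)" by (auto simp: fun_eq_iff)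
  ultimately have "summable (\<lambda>i. (if i + s < s then 0 else if even (i + s - s) then l2_seq y ((i + s - s) div 2) else - l2_seq y ((i+s-s) div 2))\<^sup>2)"
    by simp
  thus ?thesis by (subst summable_iff_shift[symmetric, of _ s])
qed

lemma Dadj_seq [simp]: "l2_seq (Dadj s y) i = (if i < s then 0 else if even (i - s) then l2_seq y ((i-s) div 2) else - l2_seq y ((i-s) div 2))"
  unfolding Dadj_def using Dadj_summ[of s y] by (simp add: l2_Abs_inv)

lemma Dop_norm: "(norm (Dop s x))\<^sup>2 \<le> 2 * (norm x)\<^sup>2"
proof -
  have "(norm (Dop s x))\<^sup>2 = (\<Sum>j. (l2_seq x (2*j+s) - l2_seq x (2*j+s+1))\<^sup>2)"
    by (simp add: l2_norm_sq)
  also have "... \<le> (\<Sum>j. 2 * ((l2_seq x (2*j+s))\<^sup>2 + (l2_seq x (2*j+s+1))\<^sup>2))"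
    apply (rule suminf_le)
    using l2_sq_add_le[of "l2_seq x (2*_+s)" "- l2_seq x (2*_+s+1)"]
      apply simp
     apply (rule Dop_summ)
    by (rule summable_mult[OF pair_summable[OF l2_summ]])
  also have "... = 2 * (\<Sum>j. ((l2_seq x (2*j+s))\<^sup>2 + (l2_seq x (2*j+s+1))\<^sup>2))"
  proof -
    have ps: "summable (\<lambda>j. (l2_seq x (2*j+s))\<^sup>2 + (l2_seq x (2*j+s+1))\<^sup>2)"
      using pair_summable[OF l2_summ[of x], of s] by simp
    show ?thesis by (rule suminf_mult[OF ps])
  qed
  also have "... = 2 * ((norm x)\<^sup>2 - (\<Sum>i<s. (l2_seq x i)\<^sup>2))"
    using pair_suminf[OF l2_summ[of x], of s] by (simp add: l2_norm_sq)
  also have "... \<le> 2 * (norm x)\<^sup>2"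
    by (simp add: sum_nonneg)
  finally show ?thesis .
qed

lemma Dadj_norm: "(norm (Dadj s y))\<^sup>2 = 2 * (norm y)\<^sup>2"
proof -
  have "(norm (Dadj s y))\<^sup>2 = (\<Sum>i. (l2_seq (Dadj s y) i)\<^sup>2)" by (rule l2_norm_sq)
  also have "... = (\<Sum>i<s. (l2_seq (Dadj s y) i)\<^sup>2) + (\<Sum>j. (l2_seq (Dadj s y) (2*j+s))\<^sup>2 + (l2_seq (Dadj s y) (2*j+s+1))\<^sup>2)"
    by (rule pair_suminf[OF l2_summ])
  also have "... = (\<Sum>j. 2 * (l2_seq y j)\<^sup>2)"
    by simp
  also have "... = 2 * (norm y)\<^sup>2"
    by (simp add: suminf_mult l2_summ l2_norm_sq)
  finally show ?thesis .
qed

lemma Dop_adj: "inner (Dop s x) y = inner x (Dadj s y)"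
proof -
  have "inner x (Dadj s y) = (\<Sum>i<s. l2_seq x i * l2_seq (Dadj s y) i) +
      (\<Sum>j. l2_seq x (2*j+s) * l2_seq (Dadj s y) (2*j+s) + l2_seq x (2*j+s+1) * l2_seq (Dadj s y) (2*j+s+1))"
    unfolding l2_inner by (rule pair_suminf[OF l2_inner_summable])
  also have "... = (\<Sum>j. l2_seq (Dop s x) j * l2_seq y j)"
    by (simp add: algebra_simps)
  finally show ?thesis by (simp add: l2_inner)
qed

lemma Dop_add [simp]: "Dop s (x + y) = Dop s x + Dop s y" by (rule l2_eqI) simp
lemma Dop_diff [simp]: "Dop s (x - y) = Dop s x - Dop s y" by (rule l2_eqI) simp
lemma Dop_scale [simp]: "Dop s (r *\<^sub>R x) = r *\<^sub>R Dop s x" by (rule l2_eqI) (simp add: algebra_simps)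
lemma Dop_zero [simp]: "Dop s 0 = 0" by (rule l2_eqI) simp
lemma Dadj_add [simp]: "Dadj s (x + y) = Dadj s x + Dadj s y" by (rule l2_eqI) simp
lemma Dadj_diff [simp]: "Dadj s (x - y) = Dadj s x - Dadj s y" by (rule l2_eqI) simp
lemma Dadj_scale [simp]: "Dadj s (r *\<^sub>R x) = r *\<^sub>R Dadj s x" by (rule l2_eqI) simp

lemma Dop_norm': "norm (Dop s x) \<le> norm x * sqrt 2"
proof -
  have "norm (Dop s x) \<le> sqrt (2 * (norm x)\<^sup>2)"
    using Dop_norm by (rule real_le_rsqrt)
  thus ?thesis by (simp add: real_sqrt_mult mult.commute)
qed

lemma bl_Dop: "bounded_linear (Dop s)"
  by (rule bounded_linear_intro[OF Dop_add Dop_scale Dop_norm'])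

lemma DD_norm: "norm (Dadj s (Dop s x)) \<le> 2 * norm x"
proof -
  have "(norm (Dadj s (Dop s x)))\<^sup>2 \<le> (2 * norm x)\<^sup>2"
    using Dadj_norm[of s "Dop s x"] Dop_norm[of s x] by (simp add: power_mult_distrib)
  thus ?thesis by (rule power2_le_imp_le) simp
qed

lemma DD_seq: "l2_seq (Dadj s (Dop s x)) i = (if i < s then 0 else if even (i - s) then l2_seq x i - l2_seq x (i+1) else l2_seq x i - l2_seq x (i - 1))"
proof -
  consider "i < s" | "i \<ge> s" "even (i - s)" | "i \<ge> s" "odd (i - s)" by linarith
  thus ?thesis
  proof cases
    case 2
    hence "2 * ((i - s) div 2) + s = i" by simp
    thus ?thesis using 2 by simp
  next
    case 3
    have "2 * ((i - s) div 2) + 1 = i - s" using odd_two_times_div_two_succ 3(2) by blast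
    hence "2 * ((i - s) div 2) + s + 1 = i" using 3(1) by linarith
    thus ?thesis using 3 by (auto simp: algebra_simps)
  qed simp
qed


lemma sq_convex_ineq:
  fixes a b :: "'a::real_inner"
  assumes "0 \<le> t" "t \<le> 1"
  shows "(norm ((1-t) *\<^sub>R a + t *\<^sub>R b))\<^sup>2 \<le> (1-t) * (norm a)\<^sup>2 + t * (norm b)\<^sup>2"
proof -
  have "(1-t) * (norm a)\<^sup>2 + t * (norm b)\<^sup>2 - (norm ((1-t) *\<^sub>R a + t *\<^sub>R b))\<^sup>2 = t * (1-t) * (norm (a - b))\<^sup>2"
    unfolding power2_norm_eq_inner by (simp add: inner_add_left inner_add_right inner_diff_left inner_diff_right
        inner_commute algebra_simps)
  moreover have "0 \<le> t * (1-t) * (norm (a - b))\<^sup>2" using assms by simp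
  ultimately show ?thesis by linarith
qed

definition Q :: "nat \<Rightarrow> l2 \<Rightarrow> real" where "Q s x = (norm (Dop s x))\<^sup>2"

lemma Q_nonneg: "0 \<le> Q s x" unfolding Q_def by simp
lemma Q_le: "Q s x \<le> 2 * (norm x)\<^sup>2" unfolding Q_def by (rule Dop_norm)
lemma Q_scale: "Q s (r *\<^sub>R x) = r\<^sup>2 * Q s x" unfolding Q_def by (simp add: power_mult_distrib)
lemma Q_add: "Q s (x + d) = Q s x + 2 * inner (Dop s x) (Dop s d) + Q s d"
  unfolding Q_def by (simp add: power2_norm_eq_inner inner_add_left inner_add_right inner_commute)

lemma convex_Q: "convex_on UNIV (Q s)"
proof (rule convex_onI)
  fix t :: real and x y :: l2 assume "0 < t" "t < 1"
  thus "Q s ((1 - t) *\<^sub>R x + t *\<^sub>R y) \<le> (1 - t) * Q s x + t * Q s y"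
    unfolding Q_def using sq_convex_ineq[of t "Dop s x" "Dop s y"] by simp
qed simp

lemma Q_deriv: "(Q s has_derivative (\<lambda>h. inner (2 *\<^sub>R Dadj s (Dop s x)) h)) (at x)"
proof -
  have d: "(Dop s has_derivative Dop s) (at x)" by (rule bounded_linear.has_derivative[OF bl_Dop has_derivative_ident])
  have "((\<lambda>x. inner (Dop s x) (Dop s x)) has_derivative (\<lambda>h. inner (Dop s x) (Dop s h) + inner (Dop s h) (Dop s x))) (at x)"
    by (rule has_derivative_inner[OF d d])
  moreover have "(\<lambda>x. inner (Dop s x) (Dop s x)) = Q s" unfolding Q_def by (simp add: power2_norm_eq_inner fun_eq_iff)
  moreover have "(\<lambda>h. inner (Dop s x) (Dop s h) + inner (Dop s h) (Dop s x)) = (\<lambda>h. inner (2 *\<^sub>R Dadj s (Dop s x)) h)"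
    by (auto simp: fun_eq_iff Dop_adj inner_commute)
  ultimately show ?thesis by simp
qed

lemma Q_sum: "Q s x = (\<Sum>j. (l2_seq x (2*j+s) - l2_seq x (2*j+s+1))\<^sup>2)"
  unfolding Q_def by (simp add: l2_norm_sq)

lemma Q_split:
  assumes "even (k + 1 + s)"
  shows "Q s x = Q s (trunc k x) + Q s (x - trunc k x)"
proof -
  have "Q s (trunc k x) + Q s (x - trunc k x) = (\<Sum>j. (l2_seq (Dop s (trunc k x)) j)\<^sup>2 + (l2_seq (Dop s (x - trunc k x)) j)\<^sup>2)"
    unfolding Q_def l2_norm_sq by (rule suminf_add[OF l2_summ l2_summ])
  also have "... = (\<Sum>j. (l2_seq (Dop s x) j)\<^sup>2)"
  proof (rule arg_cong[where f=suminf], rule ext)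
    fix j
    have "2*j+s \<le> k \<longleftrightarrow> 2*j+s+1 \<le> k"
    proof
      assume h: "2*j+s \<le> k"
      have "2*j+s \<noteq> k" using assms by auto
      thus "2*j+s+1 \<le> k" using h by linarith
    qed simp
    thus "(l2_seq (Dop s (trunc k x)) j)\<^sup>2 + (l2_seq (Dop s (x - trunc k x)) j)\<^sup>2 = (l2_seq (Dop s x) j)\<^sup>2"
      by auto
  qed
  finally show ?thesis unfolding Q_def l2_norm_sq by simp
qed


definition F1 :: "real \<Rightarrow> real \<Rightarrow> l2 \<Rightarrow> real" where
  "F1 c b x = c/2 * Q 1 x - b * inner (ev 0) x"
definition G1 :: "real \<Rightarrow> real \<Rightarrow> l2 \<Rightarrow> l2" where
  "G1 c b x = c *\<^sub>R Dadj 1 (Dop 1 x) - b *\<^sub>R ev 0"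
definition U :: "real \<Rightarrow> real \<Rightarrow> l2 \<Rightarrow> real" where
  "U c a x = a/2 * (norm x)\<^sup>2 + c/2 * Q 0 x"

lemma F1_grad: "is_gradient (F1 c b) (G1 c b)"
  unfolding is_gradient_def
proof
  fix x
  have "((\<lambda>x. c/2 * Q 1 x - b * inner (ev 0) x) has_derivative
        (\<lambda>h. c/2 * inner (2 *\<^sub>R Dadj 1 (Dop 1 x)) h - b * inner (ev 0) h)) (at x)"
    by (intro derivative_intros Q_deriv)
  moreover have "(\<lambda>h. c/2 * inner (2 *\<^sub>R Dadj 1 (Dop 1 x)) h - b * inner (ev 0) h) = (\<lambda>h. inner (G1 c b x) h)"
    by (simp add: G1_def fun_eq_iff inner_diff_left)
  ultimately show "(F1 c b has_derivative (\<lambda>h. inner (G1 c b x) h)) (at x)"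
    unfolding F1_def[abs_def] by simp
qed

lemma G1_diff: "G1 c b x - G1 c b y = c *\<^sub>R Dadj 1 (Dop 1 (x - y))"
  by (simp add: G1_def algebra_simps)

lemma G1_lip: "c \<ge> 0 \<Longrightarrow> (2*c)-lipschitz_on UNIV (G1 c b)"
proof (rule lipschitz_onI)
  fix x y assume "c \<ge> 0"
  have "dist (G1 c b x) (G1 c b y) = c * norm (Dadj 1 (Dop 1 (x - y)))"
    using \<open>c \<ge> 0\<close> by (simp add: dist_norm G1_diff)
  also have "... \<le> c * (2 * norm (x - y))" using \<open>c \<ge> 0\<close> DD_norm by (rule mult_left_mono[rotated])
  finally show "dist (G1 c b x) (G1 c b y) \<le> 2 * c * dist x y" by (simp add: dist_norm)
qed simp

lemma convex_lin: "convex_on UNIV (\<lambda>x::l2. r * inner v x)"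
  by (rule convex_onI) (auto simp: inner_add_right algebra_simps)

lemma F1_convex: "c \<ge> 0 \<Longrightarrow> convex_on UNIV (F1 c b)"
proof -
  assume "c \<ge> 0"
  have "convex_on UNIV (\<lambda>x. c/2 * Q 1 x + (-b) * inner (ev 0) x)"
    using \<open>c \<ge> 0\<close> by (intro convex_on_add convex_on_cmul convex_Q convex_lin) auto
  thus ?thesis unfolding F1_def[abs_def] by simp
qed

lemma F1_smooth: "c \<ge> 0 \<Longrightarrow> smooth_convex (F1 c b)"
  unfolding smooth_convex_def using F1_convex F1_grad G1_lip by blast

lemma grad_unique:
  assumes "is_gradient g G" "is_gradient g G'" shows "G = G'"
proof
  fix x
  have "(\<lambda>h. inner (G x) h) = (\<lambda>h. inner (G' x) h)"
    using assms unfolding is_gradient_def by (metis has_derivative_unique)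
  hence "inner (G x - G' x) (G x - G' x) = 0"
    by (metis inner_diff_left right_minus_eq)
  thus "G x = G' x" by simp
qed

lemma F1_lipconst:
  assumes "c > 0" shows "grad_lip_const (F1 c b) = 2*c"
  unfolding grad_lip_const_def
proof (rule cInf_eq_minimum)
  show "2*c \<in> {L. \<exists>G. is_gradient (F1 c b) G \<and> L-lipschitz_on UNIV G}"
    by (intro CollectI exI[of _ "G1 c b"]) (simp add: F1_grad G1_lip assms less_imp_le)
next
  fix L assume "L \<in> {L. \<exists>G. is_gradient (F1 c b) G \<and> L-lipschitz_on UNIV G}"
  then obtain G where G: "is_gradient (F1 c b) G" "L-lipschitz_on UNIV G" by auto
  have GG: "G = G1 c b" using grad_unique[OF G(1) F1_grad] .
  define v where "v = ev 1 - ev 2"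
  have vne: "norm v > 0"
  proof -
    have "l2_seq v 1 = 1" by (simp add: v_def)
    hence "v \<noteq> 0" by auto
    thus ?thesis by simp
  qed
  have "Dadj 1 (Dop 1 v) = 2 *\<^sub>R v"
  proof (rule l2_eqI)
    fix i
    show "l2_seq (Dadj 1 (Dop 1 v)) i = l2_seq (2 *\<^sub>R v) i"
      unfolding DD_seq by (cases "i = 0"; cases "i = 1"; cases "i = 2"; cases "i = 3") (auto simp: v_def)
  qed
  hence "dist (G v) (G 0) = 2 * c * norm v"
    using assms by (simp add: GG dist_norm G1_diff)
  moreover have "dist (G v) (G 0) \<le> L * dist v 0" by (rule lipschitz_onD[OF G(2)]) auto
  ultimately have "2 * c * norm v \<le> L * norm v" by simp
  thus "2*c \<le> L" using vne by simp
qed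

lemma U_convex: "c \<ge> 0 \<Longrightarrow> a \<ge> 0 \<Longrightarrow> convex_on UNIV (U c a)"
proof -
  assume "c \<ge> 0" "a \<ge> 0"
  have n: "convex_on UNIV (\<lambda>x::l2. (norm x)\<^sup>2)"
    by (rule convex_onI) (rule sq_convex_ineq, auto)
  have "convex_on UNIV (\<lambda>x. a/2 * (norm x)\<^sup>2 + c/2 * Q 0 x)"
    using \<open>c \<ge> 0\<close> \<open>a \<ge> 0\<close> by (intro convex_on_add convex_on_cmul convex_Q n) auto
  thus ?thesis unfolding U_def[abs_def] by simp
qed

lemma U_cont: "continuous_on UNIV (U c a)"
proof -
  have "continuous_on UNIV (Dop 0)" by (rule linear_continuous_on[OF bl_Dop])
  hence "continuous_on UNIV (\<lambda>x. a/2 * (norm x)\<^sup>2 + c/2 * (norm (Dop 0 x))\<^sup>2)"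
    by (intro continuous_intros) (auto intro: continuous_on_compose2)
  thus ?thesis unfolding U_def[abs_def] Q_def by simp
qed

lemma U_closed: "closed_fun_on UNIV (U c a)"
proof -
  have "closed {p :: l2 \<times> real. U c a (fst p) \<le> snd p}"
    by (rule closed_Collect_le) (intro continuous_on_compose2[OF U_cont] continuous_intros | simp)+
  moreover have "{(x, y). x \<in> UNIV \<and> U c a x \<le> y} = {p :: l2 \<times> real. U c a (fst p) \<le> snd p}" by auto
  ultimately show ?thesis unfolding closed_fun_on_def by simp
qed

lemma U_modulus:
  assumes "c \<ge> 0" "a > 0"
  shows "strong_convexity_modulus UNIV (U c a) a"
  unfolding strong_convexity_modulus_def strongly_convex_on_def
proof safe
  have "convex_on UNIV (\<lambda>x. c/2 * Q 0 x)" using assms by (intro convex_on_cmul convex_Q) auto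
  thus "convex_on UNIV (\<lambda>x. U c a x - a / 2 * (norm x)\<^sup>2)" unfolding U_def by simp
next
  fix b assume "a < b" and cv: "convex_on UNIV (\<lambda>x. U c a x - b / 2 * (norm x)\<^sup>2)"
  define v where "v = ev 0 + ev 1"
  have Dv: "Dop 0 v = 0" by (rule l2_eqI) (simp add: v_def)
  have nv: "(norm v)\<^sup>2 = 2"
  proof -
    have "(norm v)\<^sup>2 = inner v v" by (simp add: power2_norm_eq_inner)
    also have "... = 2" by (simp add: v_def inner_add_left inner_add_right inner_ev)
    finally show ?thesis .
  qed
  have Qs: "Q 0 (r *\<^sub>R v) = 0" for r by (simp add: Q_def Dv)
  let ?g = "\<lambda>x. U c a x - b / 2 * (norm x)\<^sup>2"
  have "?g ((1/2) *\<^sub>R 0 + (1/2) *\<^sub>R v) \<le> (1/2) * ?g 0 + (1/2) * ?g v"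
  proof -
    have "\<forall>x\<in>UNIV. \<forall>y\<in>UNIV. \<forall>u\<ge>0. \<forall>w\<ge>0. u + w = 1 \<longrightarrow> ?g (u *\<^sub>R x + w *\<^sub>R y) \<le> u * ?g x + w * ?g y"
      using cv unfolding convex_on_def by blast
    from this[rule_format, of 0 v "1/2" "1/2"] show ?thesis by simp
  qed
  moreover have "?g ((1/2) *\<^sub>R 0 + (1/2) *\<^sub>R v) = (a - b)/2 * (1/4) * (norm v)\<^sup>2"
    using Qs[of "1/2"] by (simp add: U_def power_mult_distrib algebra_simps power_divide)
  moreover have "?g v = (a - b)/2 * (norm v)\<^sup>2" using Qs[of 1] by (simp add: U_def algebra_simps)
  moreover have "?g 0 = 0" by (simp add: U_def Q_def)
  ultimately have "(a - b)/2 * (1/4) * 2 \<le> (1/2) * ((a-b)/2 * 2)" using nv by simp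
  thus False using \<open>a < b\<close> by simp
qed


lemma Vk_diff: "a \<in> Vk k \<Longrightarrow> b \<in> Vk k \<Longrightarrow> a - b \<in> Vk k"
  by (rule subspace_diff[OF subspace_Vk])

lemma trunc_rest_zero: "trunc k (y - trunc k y) = 0" by simp

lemma F1_split:
  assumes "even k"
  shows "F1 c b x = F1 c b (trunc k x) + c/2 * Q 1 (x - trunc k x)"
proof -
  have "Q 1 x = Q 1 (trunc k x) + Q 1 (x - trunc k x)" by (rule Q_split) (use assms in simp)
  moreover have "inner (ev 0) (trunc k x) = inner (ev 0) x" by (simp add: inner_ev)
  ultimately show ?thesis unfolding F1_def by (simp add: algebra_simps)
qed

lemma worker_Vk:
  assumes c: "c > 0" and k: "even k" and xb: "xb \<in> Vk k" and pb: "pb \<in> Vk k" and tau: "0 \<le> \<tau>"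
   and pdom: "p' \<in> conj_dom (F1 c b)"
   and mx: "\<forall>p\<in>conj_dom (F1 c b). inner xb p - conj_fun (F1 c b) p - \<tau> / 2 * (norm (p - pb))\<^sup>2
                 \<le> inner xb p' - conj_fun (F1 c b) p' - \<tau> / 2 * (norm (p' - pb))\<^sup>2"
  shows "p' \<in> Vk k"
proof -
  let ?F = "F1 c b"
  define p1 where "p1 = trunc k p'"
  define p2 where "p2 = p' - p1"
  have bdd: "bdd_above (range (\<lambda>x. inner x p' - ?F x))" using pdom unfolding conj_dom_def by simp
  have Fle: "?F (trunc k x) \<le> ?F x" for x
    using F1_split[OF k, of c b x] Q_nonneg[of 1 "x - trunc k x"] c by simp
  have tp2: "trunc k p2 = 0" by (simp add: p2_def p1_def)
  have ip2: "inner p2 p' = (norm p2)\<^sup>2"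
  proof -
    have "inner p1 p2 = 0" unfolding p1_def p2_def by (rule inner_trunc_orth)
    hence "inner p2 p1 = 0" by (simp add: inner_commute)
    moreover have "p' = p1 + p2" by (simp add: p2_def)
    ultimately have "inner p2 p' = inner p2 p1 + inner p2 p2" by (metis inner_add_right)
    thus ?thesis using \<open>inner p2 p1 = 0\<close> by (simp add: power2_norm_eq_inner)
  qed
  have key: "inner y p1 - ?F y + (norm p2)\<^sup>2 / (4*c) \<le> conj_fun ?F p'" for y
  proof -
    define z where "z = (1/(2*c)) *\<^sub>R p2"
    define w where "w = trunc k y + z"
    have tz: "trunc k z = 0" unfolding z_def trunc_scale tp2 by simp
    have tw: "trunc k w = trunc k y" by (simp add: w_def tz)
    have wz: "w - trunc k w = z" by (simp add: w_def tz)
    have Fw: "?F w = ?F (trunc k y) + c/2 * Q 1 z"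
      using F1_split[OF k, of c b w, unfolded wz, unfolded tw] by simp
    have Qz: "Q 1 z \<le> 2 * (norm p2)\<^sup>2 / (4*c^2)"
      using Q_le[of 1 z] c by (simp add: z_def power_mult_distrib power_divide)
    have iw: "inner w p' = inner y p1 + (norm p2)\<^sup>2 / (2*c)"
      by (simp add: w_def z_def inner_add_left inner_trunc p1_def[symmetric] ip2)
    have "inner y p1 - ?F y + (norm p2)\<^sup>2 / (4*c) \<le> inner y p1 - ?F (trunc k y) + (norm p2)\<^sup>2 / (4*c)"
      using Fle[of y] by simp
    also have "... \<le> inner w p' - ?F w"
    proof -
      have "c/2 * Q 1 z \<le> c/2 * (2 * (norm p2)\<^sup>2 / (4*c^2))" using Qz c by (intro mult_left_mono) auto
      also have "... = (norm p2)\<^sup>2 / (4*c)" using c by (simp add: power2_eq_square field_simps)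
      finally have "c/2 * Q 1 z \<le> (norm p2)\<^sup>2 / (4*c)" .
      moreover have "(norm p2)\<^sup>2 / (2*c) = 2 * ((norm p2)\<^sup>2 / (4*c))" using c by (simp add: field_simps)
      ultimately show ?thesis using iw Fw by linarith
    qed
    also have "... \<le> conj_fun ?F p'" unfolding conj_fun_def by (rule cSUP_upper[OF UNIV_I bdd])
    finally show ?thesis .
  qed
  have bdd1: "p1 \<in> conj_dom ?F" unfolding conj_dom_def
  proof (simp, rule bdd_aboveI2)
    fix y show "inner y p1 - ?F y \<le> conj_fun ?F p' - (norm p2)\<^sup>2 / (4*c)" using key[of y] by simp
  qed
  have cf1: "conj_fun ?F p1 \<le> conj_fun ?F p' - (norm p2)\<^sup>2 / (4*c)"
    unfolding conj_fun_def[of _ p1]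
  proof (rule cSUP_least)
    fix y show "inner y p1 - ?F y \<le> conj_fun ?F p' - (norm p2)\<^sup>2 / (4*c)" using key[of y] by linarith
  qed simp
  have i1: "inner xb p1 = inner xb p'"
  proof -
    have "inner xb (p' - trunc k p') = 0" by (rule inner_Vk_orth[OF xb])
    thus ?thesis by (simp add: p1_def inner_diff_right)
  qed
  have n1: "(norm (p' - pb))\<^sup>2 = (norm (p1 - pb))\<^sup>2 + (norm p2)\<^sup>2"
  proof -
    have a: "p1 - pb \<in> Vk k" unfolding p1_def by (rule Vk_diff[OF trunc_in_Vk pb])
    have "p' - pb = (p1 - pb) + (p' - trunc k p')" by (simp add: p1_def)
    thus ?thesis using pyth[OF a, of p'] by (simp add: p2_def p1_def)
  qed
  have "inner xb p1 - conj_fun ?F p1 - \<tau> / 2 * (norm (p1 - pb))\<^sup>2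
                 \<le> inner xb p' - conj_fun ?F p' - \<tau> / 2 * (norm (p' - pb))\<^sup>2"
    using mx bdd1 by blast
  hence "(norm p2)\<^sup>2 / (4*c) \<le> - \<tau> / 2 * (norm p2)\<^sup>2"
    using i1 n1 cf1 by (simp add: algebra_simps)
  moreover have "0 \<le> \<tau> / 2 * (norm p2)\<^sup>2" using tau by simp
  ultimately have "(norm p2)\<^sup>2 / (4*c) \<le> 0" by linarith
  hence "(norm p2)\<^sup>2 \<le> 0" using c by (simp add: divide_le_0_iff)
  hence "p2 = 0" by simp
  hence "trunc k p' = p'" by (metis p1_def p2_def eq_iff_diff_eq_0)
  thus ?thesis by (simp only: Vk_iff_trunc)
qed

lemma U_split:
  assumes "odd k"
  shows "U c a x = U c a (trunc k x) + a/2 * (norm (x - trunc k x))\<^sup>2 + c/2 * Q 0 (x - trunc k x)"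
proof -
  have "Q 0 x = Q 0 (trunc k x) + Q 0 (x - trunc k x)" by (rule Q_split) (use assms in simp)
  thus ?thesis unfolding U_def using norm_trunc_split[of x k] by (simp add: algebra_simps)
qed

lemma server_Vk:
  assumes c: "c \<ge> 0" and a: "a \<ge> 0" and k: "odd k" and xb: "xb \<in> Vk k" and eta: "0 < \<eta>"
   and mn: "\<forall>x\<in>UNIV. U c a z + \<eta> / 2 * (norm (z - xb))\<^sup>2 \<le> U c a x + \<eta> / 2 * (norm (x - xb))\<^sup>2"
  shows "z \<in> Vk k"
proof -
  have n1: "(norm (z - xb))\<^sup>2 = (norm (trunc k z - xb))\<^sup>2 + (norm (z - trunc k z))\<^sup>2"
  proof -
    have a: "trunc k z - xb \<in> Vk k" by (rule Vk_diff[OF trunc_in_Vk xb])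
    have "z - xb = (trunc k z - xb) + (z - trunc k z)" by simp
    thus ?thesis using pyth[OF a, of z] by simp
  qed
  have "U c a z + \<eta> / 2 * (norm (z - xb))\<^sup>2 \<le> U c a (trunc k z) + \<eta> / 2 * (norm (trunc k z - xb))\<^sup>2"
    using mn by blast
  hence "\<eta> / 2 * (norm (z - trunc k z))\<^sup>2 \<le> - (a/2 * (norm (z - trunc k z))\<^sup>2 + c/2 * Q 0 (z - trunc k z))"
    using U_split[OF k, of c a z] n1 by (simp add: algebra_simps)
  moreover have "0 \<le> a/2 * (norm (z - trunc k z))\<^sup>2 + c/2 * Q 0 (z - trunc k z)"
    using a c Q_nonneg by simp
  ultimately have "\<eta> / 2 * (norm (z - trunc k z))\<^sup>2 \<le> 0" by linarith
  hence "(norm (z - trunc k z))\<^sup>2 \<le> 0" using eta by (simp add: mult_le_0_iff)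
  hence "trunc k z = z" by simp
  thus ?thesis by (simp only: Vk_iff_trunc)
qed


definition dpm_inv :: "nat \<Rightarrow> nat \<Rightarrow> (l2, l2) dpm_state \<Rightarrow> bool" where
  "dpm_inv a b s \<longleftrightarrow> fst s \<subseteq> Vk a \<and> (\<forall>i. fst (snd s i) \<subseteq> Vk b \<and> snd (snd s i) \<subseteq> Vk b)"

lemma local_inv:
  assumes c: "c > 0" and al: "al \<ge> 0" and a: "odd a" and b: "even b" and I: "dpm_inv a b s"
    and st: "local_step 1 (\<lambda>i. id) (\<lambda>i. id) (\<lambda>i. conj_dom (F1 c bb)) (\<lambda>i. conj_fun (F1 c bb)) UNIV (U c al) s s'"
  shows "dpm_inv a b s'"
  using st unfolding local_step_def
proof (elim disjE exE conjE)
  fix i assume i: "i < 1" and f: "fst s' = fst s"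
    and ws: "worker_step id id (conj_dom (F1 c bb)) (conj_fun (F1 c bb)) (snd s i) (snd s' i)"
    and oth: "\<forall>j. j \<noteq> i \<longrightarrow> snd s' j = snd s j"
  have i0: "i = 0" using i by simp
  from ws obtain xb pb \<tau> p' where
    xb: "xb \<in> span (fst (snd s i))" and pb: "pb \<in> span (snd (snd s i))" and tau: "0 \<le> \<tau>"
    and pd: "p' \<in> conj_dom (F1 c bb)"
    and mx: "\<forall>p\<in>conj_dom (F1 c bb). inner (id xb) p - conj_fun (F1 c bb) p - \<tau> / 2 * (norm (p - pb))\<^sup>2
                 \<le> inner (id xb) p' - conj_fun (F1 c bb) p' - \<tau> / 2 * (norm (p' - pb))\<^sup>2"
    and M: "snd s' i = (fst (snd s i) \<union> {id p', id pb}, snd (snd s i) \<union> {p', id xb})"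
    unfolding worker_step_def by blast
  have xbV: "xb \<in> Vk b" using xb span_Vk I unfolding dpm_inv_def by blast
  have pbV: "pb \<in> Vk b" using pb span_Vk I unfolding dpm_inv_def by blast
  have pV: "p' \<in> Vk b" by (rule worker_Vk[OF c b xbV pbV tau pd]) (use mx in simp)
  have "fst s' \<subseteq> Vk a" using I f unfolding dpm_inv_def by simp
  moreover have "\<forall>j. fst (snd s' j) \<subseteq> Vk b \<and> snd (snd s' j) \<subseteq> Vk b"
  proof
    fix j
    show "fst (snd s' j) \<subseteq> Vk b \<and> snd (snd s' j) \<subseteq> Vk b"
    proof (cases "j = i")
      case True thus ?thesis using M I xbV pbV pV unfolding dpm_inv_def by auto
    next
      case False thus ?thesis using oth I unfolding dpm_inv_def by auto
    qed
  qed
  ultimately show "dpm_inv a b s'" unfolding dpm_inv_def by blast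
next
  assume ss: "server_step UNIV (U c al) (fst s) (fst s')" and sn: "snd s' = snd s"
  from ss obtain xb \<eta> z where xb: "xb \<in> span (fst s)" and eta: "0 < \<eta>"
    and mn: "\<forall>x\<in>UNIV. U c al z + \<eta> / 2 * (norm (z - xb))\<^sup>2 \<le> U c al x + \<eta> / 2 * (norm (x - xb))\<^sup>2"
    and S: "fst s' = fst s \<union> {z}"
    unfolding server_step_def by blast
  have xbV: "xb \<in> Vk a" using xb span_Vk I unfolding dpm_inv_def by blast
  have zV: "z \<in> Vk a" by (rule server_Vk[OF _ al a xbV eta mn]) (use c in simp)
  show "dpm_inv a b s'" using I S sn zV unfolding dpm_inv_def by auto
qed

lemma local_star_inv:
  assumes c: "c > 0" and al: "al \<ge> 0" and a: "odd a" and b: "even b"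
    and st: "(local_step 1 (\<lambda>i. id) (\<lambda>i. id) (\<lambda>i. conj_dom (F1 c bb)) (\<lambda>i. conj_fun (F1 c bb)) UNIV (U c al))\<^sup>*\<^sup>* s s'"
    and I: "dpm_inv a b s"
  shows "dpm_inv a b s'"
  using st I
proof (induction rule: rtranclp_induct)
  case (step y z) thus ?case using local_inv[OF c al a b] by blast
qed simp

lemma comm_inv:
  assumes I: "dpm_inv a b s" and ba: "b \<le> a" and cr: "comm_round 1 s s1"
  shows "dpm_inv (a+2) (a+1) s1"
proof -
  from cr obtain v w where v: "\<forall>i<1. v i \<in> span (fst (snd s i))"
    and S: "fst s1 = fst s \<union> v ` {..<1}" and w: "\<forall>i<1. w i \<in> span (fst s1)"
    and W: "snd s1 = (\<lambda>i. if i < 1 then (fst (snd s i) \<union> {w i}, snd (snd s i)) else snd s i)"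
    unfolding comm_round_def by blast
  have VbVa: "Vk b \<subseteq> Vk a" using Vk_mono[OF ba] .
  have v0: "v 0 \<in> Vk a" using v I span_Vk VbVa unfolding dpm_inv_def by blast
  have S1: "fst s1 \<subseteq> Vk a" using S I v0 unfolding dpm_inv_def by auto
  have w0: "w 0 \<in> Vk a" using w S1 span_Vk by blast
  have A1: "Vk a \<subseteq> Vk (a+1)" "Vk a \<subseteq> Vk (a+2)" "Vk b \<subseteq> Vk (a+1)" using Vk_mono ba by auto
  have "fst s1 \<subseteq> Vk (a+2)" using S1 A1 by auto
  moreover have "\<forall>i. fst (snd s1 i) \<subseteq> Vk (a + 1) \<and> snd (snd s1 i) \<subseteq> Vk (a + 1)"
  proof
    fix i
    have "fst (snd s i) \<subseteq> Vk (a+1)" "snd (snd s i) \<subseteq> Vk (a+1)" using I A1(3) unfolding dpm_inv_def by blast+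
    thus "fst (snd s1 i) \<subseteq> Vk (a + 1) \<and> snd (snd s1 i) \<subseteq> Vk (a + 1)"
      using A1(1) w0 unfolding W by auto
  qed
  ultimately show ?thesis unfolding dpm_inv_def by blast
qed

lemma reach_inv:
  assumes c: "c > 0" and al: "al \<ge> 0"
    and r: "dpm_reach 1 (\<lambda>i. id) (\<lambda>i. id) (\<lambda>i. conj_dom (F1 c bb)) (\<lambda>i. conj_fun (F1 c bb)) UNIV (U c al) t s"
  shows "dpm_inv (2*t+1) (2*t) s"
  using r
proof (induction rule: dpm_reach.induct)
  case (init s)
  have "dpm_inv 1 0 dpm_init" unfolding dpm_inv_def dpm_init_def Vk_def by auto
  thus ?case using local_star_inv[OF c al _ _ init] by simp
next
  case (round t s s1 s2)
  have "dpm_inv (2*t+1+2) (2*t+1+1) s1" by (rule comm_inv[OF round.IH _ round.hyps(2)]) simp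
  hence "dpm_inv (2*Suc t+1) (2*Suc t) s1" by (simp add: algebra_simps)
  thus ?case using local_star_inv[OF c al _ _ round.hyps(3)] by simp
qed

lemma outputs_Vk:
  assumes "dpm_inv a b s" "b \<le> a"
  shows "dpm_outputs 1 s \<subseteq> Vk a"
  unfolding dpm_outputs_def
  by (rule span_Vk) (use assms Vk_mono[OF assms(2)] in \<open>auto simp: dpm_inv_def\<close>)


lemma exists_q:
  fixes r :: real assumes "0 < r" "r < 1/4"
  shows "\<exists>q. 1/2 \<le> q \<and> q < 1 \<and> (1-q)\<^sup>2 = r * q"
proof -
  let ?g = "\<lambda>q::real. (1-q)\<^sup>2 - r * q"
  have "?g 1 \<le> 0" using assms by simp
  moreover have "0 \<le> ?g (1/2)" using assms by (simp add: power2_eq_square)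
  ultimately obtain q where q: "1/2 \<le> q" "q \<le> 1" "?g q = 0"
    using IVT2[of ?g 1 0 "1/2"] by (auto intro!: continuous_intros)
  have "q \<noteq> 1" using q(3) assms by auto
  thus ?thesis using q by auto
qed

lemma xs_summ:
  fixes q R :: real assumes "0 \<le> q" "q < 1" shows "summable (\<lambda>i. (R * q^i)\<^sup>2)"
proof -
  have "q\<^sup>2 < 1" using assms by (simp add: power_less_one_iff)
  hence "norm (q\<^sup>2) < 1" by simp
  hence "summable (\<lambda>i. R\<^sup>2 * (q\<^sup>2)^i)" by (intro summable_mult summable_geometric)
  moreover have "(\<lambda>i. R\<^sup>2 * (q\<^sup>2)^i) = (\<lambda>i. (R * q^i)\<^sup>2)"
    by (simp add: fun_eq_iff power2_eq_square power_mult_distrib)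
  ultimately show ?thesis by simp
qed

lemma final_ineq:
  fixes q Lf al eps :: real and t :: nat
  assumes q: "1/2 \<le> q" "q < 1" and al: "0 < al" and kap: "Lf / al = 2*q/(1-q)\<^sup>2"
    and eps: "0 < eps" and bnd: "q^(4*t) \<le> eps"
  shows "real t \<ge> 1/8 * sqrt (Lf / al) * ln (1 / eps)"
proof (cases "eps \<ge> 1")
  case True
  hence "ln (1/eps) \<le> 0" using eps by simp
  moreover have "0 \<le> sqrt (Lf / al)" using kap q by simp
  ultimately have "sqrt (Lf / al) * ln (1 / eps) \<le> 0" by (simp add: mult_nonneg_nonpos)
  thus ?thesis by simp
next
  case False
  have qp: "0 < q" using q by simp
  have "ln (q^(4*t)) \<le> ln eps" using bnd eps qp by simp
  hence "real (4*t) * ln q \<le> ln eps" using qp by (simp add: ln_realpow)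
  moreover have "ln (1/q) \<le> 1/q - 1" using qp by (intro ln_le_minus_one) simp
  ultimately have L: "ln (1/eps) \<le> 4 * t * ((1-q)/q)"
  proof -
    assume a1: "real (4*t) * ln q \<le> ln eps" and a2: "ln (1/q) \<le> 1/q - 1"
    have "ln (1/eps) = - ln eps" using eps by (simp add: ln_div)
    also have "... \<le> 4 * t * (- ln q)" using a1 by simp
    also have "... = 4 * t * ln (1/q)" using qp by (simp add: ln_div)
    also have "... \<le> 4 * t * (1/q - 1)" using a2 by (intro mult_left_mono) auto
    also have "1/q - 1 = (1-q)/q" using qp by (simp add: field_simps)
    finally show ?thesis .
  qed
  have S: "sqrt (Lf/al) \<le> 2*q/(1-q)"
  proof -
    have "Lf/al \<le> (2*q/(1-q))\<^sup>2"
      unfolding kap using q by (simp add: power_divide divide_right_mono power2_eq_square)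
    hence "sqrt (Lf/al) \<le> sqrt ((2*q/(1-q))\<^sup>2)" by (rule real_sqrt_le_mono)
    also have "... = 2*q/(1-q)" using q by simp
    finally show ?thesis .
  qed
  have lp: "0 \<le> ln (1/eps)" using False eps by simp
  have sp: "0 \<le> sqrt (Lf/al)" using kap q by simp
  have "1/8 * sqrt (Lf / al) * ln (1 / eps) \<le> 1/8 * (2*q/(1-q)) * (4 * t * ((1-q)/q))"
    using S L lp sp by (intro mult_mono) (auto intro: mult_nonneg_nonneg simp: q qp less_imp_le)
  also have "... = t" using q qp by (simp add: field_simps)
  finally show ?thesis .
qed


lemma quad_opt:
  assumes "cc \<ge> 0" "al \<ge> 0"
    and g0: "cc *\<^sub>R Dadj 1 (Dop 1 xs) + cc *\<^sub>R Dadj 0 (Dop 0 xs) + al *\<^sub>R xs - bb *\<^sub>R ev 0 = 0"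
  shows "F1 cc bb xs + U cc al xs \<le> F1 cc bb x + U cc al x"
proof -
  define d where "d = x - xs"
  have xd: "x = xs + d" by (simp add: d_def)
  have e1: "inner (Dop s xs) (Dop s d) = inner (Dadj s (Dop s xs)) d" for s
    by (metis Dop_adj inner_commute)
  have "inner (cc *\<^sub>R Dadj 1 (Dop 1 xs) + cc *\<^sub>R Dadj 0 (Dop 0 xs) + al *\<^sub>R xs - bb *\<^sub>R ev 0) d = 0"
    using g0 by simp
  hence lin: "cc * inner (Dop 1 xs) (Dop 1 d) + cc * inner (Dop 0 xs) (Dop 0 d) + al * inner xs d - bb * inner (ev 0) d = 0"
    unfolding e1 by (simp add: inner_add_left inner_diff_left)
  have nrm: "(norm (xs + d))\<^sup>2 = (norm xs)\<^sup>2 + 2 * inner xs d + (norm d)\<^sup>2"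
    by (simp add: power2_norm_eq_inner inner_add_left inner_add_right inner_commute)
  have "F1 cc bb x + U cc al x = (F1 cc bb xs + U cc al xs) +
      (cc * inner (Dop 1 xs) (Dop 1 d) + cc * inner (Dop 0 xs) (Dop 0 d) + al * inner xs d - bb * inner (ev 0) d) +
      (cc/2 * Q 1 d + cc/2 * Q 0 d + al/2 * (norm d)\<^sup>2)"
    unfolding xd F1_def U_def Q_add nrm inner_add_right by (simp add: algebra_simps)
  moreover have "0 \<le> cc/2 * Q 1 d + cc/2 * Q 0 d + al/2 * (norm d)\<^sup>2"
    using assms(1,2) Q_nonneg by simp
  ultimately show ?thesis using lin by linarith
qed

lemma gvec_zero:
  assumes aq: "al * q = cc * (1-q)\<^sup>2" and xs: "\<And>i. l2_seq xs i = R * q^i"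
    and bb: "bb = R*(cc*(1-q) + al)"
  shows "cc *\<^sub>R Dadj 1 (Dop 1 xs) + cc *\<^sub>R Dadj 0 (Dop 0 xs) + al *\<^sub>R xs - bb *\<^sub>R ev 0 = 0"
proof (rule l2_eqI)
  fix i
  show "l2_seq (cc *\<^sub>R Dadj 1 (Dop 1 xs) + cc *\<^sub>R Dadj 0 (Dop 0 xs) + al *\<^sub>R xs - bb *\<^sub>R ev 0) i = l2_seq 0 i"
  proof (cases i)
    case 0
    thus ?thesis by (simp add: DD_seq xs bb algebra_simps)
  next
    case (Suc j)
    have A: "l2_seq (Dadj 1 (Dop 1 xs)) (Suc j) + l2_seq (Dadj 0 (Dop 0 xs)) (Suc j)
        = 2 * (R*q^Suc j) - R*q^(Suc j+1) - R*q^j"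
      by (cases "even j") (simp_all add: DD_seq xs)
    have key: "cc * (2 * (R*q^Suc j) - R*q^(Suc j + 1) - R*q^j) + al*(R*q^Suc j) = R*q^j*(al*q - cc*(1-q)\<^sup>2)"
      by (simp add: algebra_simps power2_eq_square)
    have "l2_seq (cc *\<^sub>R Dadj 1 (Dop 1 xs) + cc *\<^sub>R Dadj 0 (Dop 0 xs) + al *\<^sub>R xs - bb *\<^sub>R ev 0) (Suc j)
       = cc * (l2_seq (Dadj 1 (Dop 1 xs)) (Suc j) + l2_seq (Dadj 0 (Dop 0 xs)) (Suc j)) + al * (R * q^Suc j)"
      by (simp add: xs algebra_simps)
    also have "... = 0" unfolding A key using aq by simp
    finally show ?thesis using Suc by simp
  qed
qed


theorem theorem5p3:
  "\<exists>c>0. \<forall>(Lf::real) (\<alpha>::real) (\<epsilon>::real). 0 < \<alpha> \<longrightarrow> 8 * \<alpha> < Lf \<longrightarrow> 0 < \<epsilon> \<longrightarrow>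
     (\<exists>(m::nat) (f::nat \<Rightarrow> l2 \<Rightarrow> real) (P::l2 set) (rho::l2 \<Rightarrow> real)
        (u::l2 \<Rightarrow> real) (X::l2 set) (xs::l2).
        smooth_instance m f P rho u X \<and>
        aggregate_smoothness m f P Lf \<and>
        strong_convexity_modulus X u \<alpha> \<and>
        is_optimal m f P rho u X xs \<and>
        (\<forall>t s x. smooth_dpm_reach m f X u t s \<longrightarrow> x \<in> dpm_outputs m s \<longrightarrow>
            (norm (x - xs))\<^sup>2 \<le> \<epsilon> \<longrightarrow>
            real t \<ge> c * sqrt (Lf / \<alpha>) * ln (1 / \<epsilon>)))"
proof (intro exI[of _ "1/8::real"] conjI allI impI)
  fix Lf al eps :: real
  assume al: "0 < al" and L: "8 * al < Lf" and eps: "0 < eps"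
  define cc where "cc = Lf/2"
  have ccp: "cc > 0" using al L by (simp add: cc_def)
  have r1: "0 < al/cc" using al ccp by simp
  have r2: "al/cc < 1/4" using al L ccp by (simp add: cc_def field_simps)
  obtain q where q: "1/2 \<le> q" "q < 1" "(1-q)\<^sup>2 = (al/cc) * q" using exists_q[OF r1 r2] by blast
  have qp: "0 < q" using q by simp
  have aq: "al * q = cc * (1-q)\<^sup>2" using q(3) ccp by (simp add: field_simps)
  define R where "R = 1/q\<^sup>2"
  define bb where "bb = R*(cc*(1-q) + al)"
  define xs where "xs = Abs_l2 (\<lambda>i. R * q^i)"
  have xs_seq: "l2_seq xs i = R * q^i" for i
    unfolding xs_def using xs_summ[of q R] qp q by (simp add: l2_Abs_inv)
  define F where "F = F1 cc bb"
  define f where "f = (\<lambda>i::nat. F)"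
  have obj: "objective 1 f {ev 0} (\<lambda>_. 0) (U cc al) x = F x + U cc al x" for x
    by (simp add: objective_def f_def)
  have sumF: "(\<lambda>x. \<Sum>i<1. l2_seq p i * f i x) = F" if "p \<in> {ev 0}" for p
    using that by (simp add: f_def)
  show "\<exists>(m::nat) (f::nat \<Rightarrow> l2 \<Rightarrow> real) (P::l2 set) (rho::l2 \<Rightarrow> real)
        (u::l2 \<Rightarrow> real) (X::l2 set) (xs::l2).
        smooth_instance m f P rho u X \<and>
        aggregate_smoothness m f P Lf \<and>
        strong_convexity_modulus X u al \<and>
        is_optimal m f P rho u X xs \<and>
        (\<forall>t s x. smooth_dpm_reach m f X u t s \<longrightarrow> x \<in> dpm_outputs m s \<longrightarrow>
            (norm (x - xs))\<^sup>2 \<le> eps \<longrightarrow>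
            real t \<ge> 1/8 * sqrt (Lf / al) * ln (1 / eps))"
  proof (rule exI[of _ 1], rule exI[of _ f], rule exI[of _ "{ev 0}"], rule exI[of _ "\<lambda>_. 0::real"],
      rule exI[of _ "U cc al"], rule exI[of _ UNIV], rule exI[of _ xs], intro conjI)
    have h1: "simplex_subset 1 {ev 0}" unfolding simplex_subset_def by simp
    have h2: "convex_on {ev 0} (\<lambda>_. 0::real)" by (simp add: convex_on_const)
    have "{(x, y). x \<in> {ev 0} \<and> (0::real) \<le> y} = {ev 0} \<times> {0..}" by auto
    hence h3: "closed_fun_on {ev 0} (\<lambda>_. 0::real)" unfolding closed_fun_on_def
      by (simp add: closed_Times closed_atLeast)
    have h4: "convex_on UNIV (U cc al)" using U_convex ccp al by simp
    have h5: "closed_fun_on UNIV (U cc al)" by (rule U_closed)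
    have h6: "\<forall>i<1. smooth_convex (f i)" using F1_smooth ccp by (simp add: f_def F_def)
    show "smooth_instance 1 f {ev 0} (\<lambda>_. 0) (U cc al) UNIV"
      unfolding smooth_instance_def using h1 h2 h3 h4 h5 h6 by simp
    show "aggregate_smoothness 1 f {ev 0} Lf"
      unfolding aggregate_smoothness_def using sumF F1_lipconst[OF ccp, of bb]
      by (simp add: F_def cc_def)
    show "strong_convexity_modulus UNIV (U cc al) al" using U_modulus ccp al by simp
    have g0: "cc *\<^sub>R Dadj 1 (Dop 1 xs) + cc *\<^sub>R Dadj 0 (Dop 0 xs) + al *\<^sub>R xs - bb *\<^sub>R ev 0 = 0"
      by (rule gvec_zero[OF aq xs_seq bb_def])
    show "is_optimal 1 f {ev 0} (\<lambda>_. 0) (U cc al) UNIV xs"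
      unfolding is_optimal_def obj using quad_opt[OF _ _ g0] ccp al by (simp add: F_def)
    show "\<forall>t s x. smooth_dpm_reach 1 f UNIV (U cc al) t s \<longrightarrow> x \<in> dpm_outputs 1 s \<longrightarrow>
            (norm (x - xs))\<^sup>2 \<le> eps \<longrightarrow> real t \<ge> 1/8 * sqrt (Lf / al) * ln (1 / eps)"
    proof (intro allI impI)
      fix t s x
      assume rch: "smooth_dpm_reach 1 f UNIV (U cc al) t s" and xo: "x \<in> dpm_outputs 1 s"
        and cl: "(norm (x - xs))\<^sup>2 \<le> eps"
      have "dpm_inv (2*t+1) (2*t) s"
        by (rule reach_inv[OF ccp _ rch[unfolded smooth_dpm_reach_def f_def F_def]]) (use al in simp)
      hence "x \<in> Vk (2*t+1)" using outputs_Vk xo by fastforce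
      hence x0: "l2_seq x (2*t+2) = 0" unfolding Vk_def by simp
      have e: "l2_seq (x - xs) (2*t+2) = - (q^(2*t))"
        using x0 qp by (simp add: xs_seq R_def power_add power2_eq_square)
      have "(- (q^(2*t)))\<^sup>2 \<le> (norm (x - xs))\<^sup>2" using l2_coord_le[of "x - xs" "2*t+2"] unfolding e .
      hence "(q^(2*t))\<^sup>2 \<le> eps" using cl power2_minus[of "q^(2*t)"] by linarith
      hence bnd: "q^(4*t) \<le> eps" by (simp add: power_mult[symmetric] mult.commute)
      have kap: "Lf / al = 2*q/(1-q)\<^sup>2"
      proof -
        have "al = cc * (1-q)\<^sup>2 / q" using aq qp by (simp add: field_simps)
        thus ?thesis using qp q(2) ccp al by (simp add: cc_def field_simps)
      qed
      show "real t \<ge> 1/8 * sqrt (Lf / al) * ln (1 / eps)"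
        by (rule final_ineq[OF q(1,2) al kap eps bnd])
    qed
  qed
qed (simp)

end
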